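(* Assume $H_0$ satisfies TQO-2. Let $A\in\mathcal{S}(r)$ be any square with $r\le L^*$ and let $O_A$ be any operator acting on $A$ such that $O_AP=0$. Let $B\in\mathcal{S}(r+2)$ be the square that contains $A$ and all nearest neighbors of $A$. Then $O_AP_B=0$.
   Context: Let $\Lambda=\mathbb{Z}_L\times\mathbb{Z}_L$ (periodic boundary conditions), each site $u$ carrying a finite-dimensional Hilbert space $\mathcal{H}_u$, $\mathcal{H}=\bigotimes_u\mathcal{H}_u$. For $r\ge1$, $\mathcal{S}(r)$ is the set of all $r\times r$ square blocks of sites. An operator acts on $A$ if it is the identity outside $A$. $H_0=\sum_{A\in\mathcal{S}(2)}G_A$ with each $G_A$ acting on $A$, the $G_A$ pairwise commuting, $G_A\ge0$, $G_A^2\ge G_A$, and frustration-free: the ground subspace $P=\{\psi:G_A\psi=0\ \forall A\in\mathcal{S}(2)\}$ is nonzero; $P$ also denotes its orthogonal projector. $P_A$ is the projector onto the kernel of $G_A$, and for a square $B$, $P_B=\prod_{A\in\mathcal{S}(2),A\subseteq B}P_A$. There is a constant $c>0$ and an integer $L^*\ge cL$. TQO-2: for every square $A\in\mathcal{S}(r)$, $r\le L^*$, with $B\in\mathcal{S}(r+2)$ the square containing $A$ and all its nearest neighbors, the operators $\mathrm{Tr}_{\Lambda\setminus A}(P)$ and $\mathrm{Tr}_{\Lambda\setminus A}(P_B)$ have the same kernel. *)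

theory Defs
  imports Complex_Main
begin

text \<open>Sites of the torus Z_L x Z_L are pairs of integers with coordinates in [0,L).
  A basis configuration assigns to each site u an index < d u (d u = dim H_u), and 0 to
  sites outside the region under consideration. Vectors and operators on a region are
  functions on configurations (resp. pairs of configurations) of that region.\<close>

type_synonym site = "int \<times> int"
type_synonym cfg = "site \<Rightarrow> nat"
type_synonym vec = "cfg \<Rightarrow> complex"
type_synonym op = "cfg \<Rightarrow> cfg \<Rightarrow> complex"

definition lattice :: "nat \<Rightarrow> site set" where
  "lattice L = {0..<int L} \<times> {0..<int L}"

definition square :: "nat \<Rightarrow> int \<Rightarrow> int \<Rightarrow> nat \<Rightarrow> site set" where
  "square L x y r = {((x + i) mod int L, (y + j) mod int L) | i j.
      0 \<le> i \<and> i < int r \<and> 0 \<le> j \<and> j < int r}"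

definition squares :: "nat \<Rightarrow> nat \<Rightarrow> site set set" where
  "squares L r = {square L x y r | x y. True}"

definition confs :: "(site \<Rightarrow> nat) \<Rightarrow> site set \<Rightarrow> cfg set" where
  "confs d S = {c. (\<forall>u\<in>S. c u < d u) \<and> (\<forall>u. u \<notin> S \<longrightarrow> c u = 0)}"

abbreviation C :: "nat \<Rightarrow> (site \<Rightarrow> nat) \<Rightarrow> cfg set" where
  "C L d \<equiv> confs d (lattice L)"

definition vspace :: "nat \<Rightarrow> (site \<Rightarrow> nat) \<Rightarrow> vec set" where
  "vspace L d = {v. \<forall>c. c \<notin> C L d \<longrightarrow> v c = 0}"

definition op_mult :: "nat \<Rightarrow> (site \<Rightarrow> nat) \<Rightarrow> op \<Rightarrow> op \<Rightarrow> op" where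
  "op_mult L d X Y = (\<lambda>c c'. if c \<in> C L d \<and> c' \<in> C L d
      then \<Sum>e\<in>C L d. X c e * Y e c' else 0)"

definition op_app :: "nat \<Rightarrow> (site \<Rightarrow> nat) \<Rightarrow> op \<Rightarrow> vec \<Rightarrow> vec" where
  "op_app L d X v = (\<lambda>c. if c \<in> C L d then \<Sum>e\<in>C L d. X c e * v e else 0)"

definition op_id :: "nat \<Rightarrow> (site \<Rightarrow> nat) \<Rightarrow> op" where
  "op_id L d = (\<lambda>c c'. if c \<in> C L d \<and> c = c' then 1 else 0)"

definition inner :: "nat \<Rightarrow> (site \<Rightarrow> nat) \<Rightarrow> vec \<Rightarrow> vec \<Rightarrow> complex" where
  "inner L d v w = (\<Sum>c\<in>C L d. cnj (v c) * w c)"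

definition hermitian :: "nat \<Rightarrow> (site \<Rightarrow> nat) \<Rightarrow> op \<Rightarrow> bool" where
  "hermitian L d X \<longleftrightarrow> (\<forall>c\<in>C L d. \<forall>c'\<in>C L d. X c' c = cnj (X c c'))"

definition psd :: "nat \<Rightarrow> (site \<Rightarrow> nat) \<Rightarrow> op \<Rightarrow> bool" where
  "psd L d X \<longleftrightarrow> hermitian L d X \<and>
     (\<forall>v\<in>vspace L d. 0 \<le> Re (inner L d v (op_app L d X v)))"

definition op_le :: "nat \<Rightarrow> (site \<Rightarrow> nat) \<Rightarrow> op \<Rightarrow> op \<Rightarrow> bool" where
  "op_le L d X Y \<longleftrightarrow> psd L d (\<lambda>c c'. Y c c' - X c c')"

definition restr :: "cfg \<Rightarrow> site set \<Rightarrow> cfg" where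
  "restr c A = (\<lambda>u. if u \<in> A then c u else 0)"

text \<open>X acts on A: X = X_A \<otimes> id on the complement of A.\<close>
definition acts_on :: "nat \<Rightarrow> (site \<Rightarrow> nat) \<Rightarrow> site set \<Rightarrow> op \<Rightarrow> bool" where
  "acts_on L d A X \<longleftrightarrow> (\<exists>f. \<forall>c\<in>C L d. \<forall>c'\<in>C L d.
      X c c' = (if \<forall>u\<in>lattice L - A. c u = c' u then f (restr c A) (restr c' A) else 0))"

definition is_orth_proj :: "nat \<Rightarrow> (site \<Rightarrow> nat) \<Rightarrow> op \<Rightarrow> vec set \<Rightarrow> bool" where
  "is_orth_proj L d Pm V \<longleftrightarrow>
     (\<forall>c c'. \<not> (c \<in> C L d \<and> c' \<in> C L d) \<longrightarrow> Pm c c' = 0) \<and>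
     (\<forall>v\<in>vspace L d. op_app L d Pm v \<in> V \<and>
        (\<forall>w\<in>V. inner L d w (\<lambda>c. v c - op_app L d Pm v c) = 0))"

definition orth_proj :: "nat \<Rightarrow> (site \<Rightarrow> nat) \<Rightarrow> vec set \<Rightarrow> op" where
  "orth_proj L d V = (THE Pm. is_orth_proj L d Pm V)"

definition op_kernel :: "nat \<Rightarrow> (site \<Rightarrow> nat) \<Rightarrow> op \<Rightarrow> vec set" where
  "op_kernel L d X = {v \<in> vspace L d. op_app L d X v = (\<lambda>_. 0)}"

definition ground :: "nat \<Rightarrow> (site \<Rightarrow> nat) \<Rightarrow> (site set \<Rightarrow> op) \<Rightarrow> vec set" where
  "ground L d G = {v \<in> vspace L d. \<forall>A\<in>squares L 2. op_app L d (G A) v = (\<lambda>_. 0)}"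

definition Pgs :: "nat \<Rightarrow> (site \<Rightarrow> nat) \<Rightarrow> (site set \<Rightarrow> op) \<Rightarrow> op" where
  "Pgs L d G = orth_proj L d (ground L d G)"

definition Ploc :: "nat \<Rightarrow> (site \<Rightarrow> nat) \<Rightarrow> (site set \<Rightarrow> op) \<Rightarrow> site set \<Rightarrow> op" where
  "Ploc L d G A = orth_proj L d (op_kernel L d (G A))"

text \<open>Product of a family of operators over a finite set (in some enumeration; for
  commuting factors, as here, the order is irrelevant).\<close>
definition op_prod :: "nat \<Rightarrow> (site \<Rightarrow> nat) \<Rightarrow> ('a \<Rightarrow> op) \<Rightarrow> 'a set \<Rightarrow> op" where
  "op_prod L d F S = foldr (op_mult L d) (map F (SOME xs. distinct xs \<and> set xs = S)) (op_id L d)"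

definition PB :: "nat \<Rightarrow> (site \<Rightarrow> nat) \<Rightarrow> (site set \<Rightarrow> op) \<Rightarrow> site set \<Rightarrow> op" where
  "PB L d G B = op_prod L d (Ploc L d G) {A \<in> squares L 2. A \<subseteq> B}"

definition merge :: "site set \<Rightarrow> cfg \<Rightarrow> cfg \<Rightarrow> cfg" where
  "merge A a e = (\<lambda>u. if u \<in> A then a u else e u)"

definition ptrace :: "nat \<Rightarrow> (site \<Rightarrow> nat) \<Rightarrow> site set \<Rightarrow> op \<Rightarrow> op" where
  "ptrace L d A X = (\<lambda>a a'. if a \<in> confs d A \<and> a' \<in> confs d A
      then \<Sum>e\<in>confs d (lattice L - A). X (merge A a e) (merge A a' e) else 0)"

definition loc_kernel :: "(site \<Rightarrow> nat) \<Rightarrow> site set \<Rightarrow> op \<Rightarrow> vec set" where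
  "loc_kernel d A T = {v. (\<forall>a. a \<notin> confs d A \<longrightarrow> v a = 0) \<and>
      (\<forall>a\<in>confs d A. (\<Sum>a'\<in>confs d A. T a a' * v a') = 0)}"

text \<open>Standing assumptions on H_0 = sum of G_A.\<close>
definition H0_assms :: "nat \<Rightarrow> (site \<Rightarrow> nat) \<Rightarrow> (site set \<Rightarrow> op) \<Rightarrow> bool" where
  "H0_assms L d G \<longleftrightarrow>
     (\<forall>A\<in>squares L 2. acts_on L d A (G A)) \<and>
     (\<forall>A\<in>squares L 2. \<forall>A'\<in>squares L 2. op_mult L d (G A) (G A') = op_mult L d (G A') (G A)) \<and>
     (\<forall>A\<in>squares L 2. psd L d (G A)) \<and>
     (\<forall>A\<in>squares L 2. op_le L d (G A) (op_mult L d (G A) (G A))) \<and>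
     (\<exists>v\<in>ground L d G. v \<noteq> (\<lambda>_. 0))"

definition TQO2 :: "nat \<Rightarrow> (site \<Rightarrow> nat) \<Rightarrow> (site set \<Rightarrow> op) \<Rightarrow> nat \<Rightarrow> bool" where
  "TQO2 L d G Lstar \<longleftrightarrow> (\<forall>r x y. 1 \<le> r \<and> r \<le> Lstar \<longrightarrow>
     loc_kernel d (square L x y r) (ptrace L d (square L x y r) (Pgs L d G)) =
     loc_kernel d (square L x y r)
        (ptrace L d (square L x y r) (PB L d G (square L (x - 1) (y - 1) (r + 2)))))"

end

theory Submission
  imports Defs "HOL-Library.FuncSet"
begin

lemma confs_out: "c \<in> confs d S \<Longrightarrow> u \<notin> S \<Longrightarrow> c u = 0"
  unfolding confs_def by blast
lemma confs_in: "c \<in> confs d S \<Longrightarrow> u \<in> S \<Longrightarrow> c u < d u"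
  unfolding confs_def by blast

lemma finite_confs:
  assumes "finite S" shows "finite (confs d S)"
proof -
  have inj: "inj_on (\<lambda>c. restrict c S) (confs d S)"
  proof (rule inj_onI)
    fix c c' assume c: "c \<in> confs d S" and c': "c' \<in> confs d S"
      and eq: "restrict c S = restrict c' S"
    show "c = c'"
    proof
      fix u show "c u = c' u"
      proof -
        have "restrict c S u = restrict c' S u" using eq by simp
        moreover have "c u = 0" "c' u = 0" if "u \<notin> S" using c c' that by (auto intro: confs_out)
        ultimately show ?thesis by (cases "u \<in> S") auto
      qed
    qed
  qed
  have "(\<lambda>c. restrict c S) ` confs d S \<subseteq> PiE S (\<lambda>u. {..<d u})"
    by (auto simp: confs_def)
  hence "finite ((\<lambda>c. restrict c S) ` confs d S)"
    using finite_PiE[OF assms, of "\<lambda>u. {..<d u}"] finite_subset by blast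
  thus ?thesis using finite_imageD inj by blast
qed

lemma finite_lattice: "finite (lattice L)"
  by (simp add: lattice_def)

lemma finite_C: "finite (C L d)"
  by (simp add: finite_confs finite_lattice)

definition delta :: "cfg \<Rightarrow> vec" where "delta c0 = (\<lambda>c. if c = c0 then 1 else 0)"

lemma op_app_delta: "c' \<in> C L d \<Longrightarrow> op_app L d X (delta c') c = (if c \<in> C L d then X c c' else 0)"
  by (simp add: op_app_def delta_def if_distrib finite_C cong: if_cong)

lemma delta_vspace: "c' \<in> C L d \<Longrightarrow> delta c' \<in> vspace L d"
  by (auto simp: vspace_def delta_def)

lemma op_app_vspace: "op_app L d X v \<in> vspace L d"
  by (simp add: vspace_def op_app_def)

lemma op_app_mult: "op_app L d (op_mult L d X Y) v = op_app L d X (op_app L d Y v)"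
proof
  fix c
  show "op_app L d (op_mult L d X Y) v c = op_app L d X (op_app L d Y v) c"
  proof (cases "c \<in> C L d")
    case True
    have "op_app L d (op_mult L d X Y) v c = (\<Sum>e\<in>C L d. \<Sum>f\<in>C L d. X c f * Y f e * v e)"
      using True by (simp add: op_app_def op_mult_def sum_distrib_right)
    also have "\<dots> = (\<Sum>f\<in>C L d. \<Sum>e\<in>C L d. X c f * Y f e * v e)" by (rule sum.swap)
    also have "\<dots> = op_app L d X (op_app L d Y v) c"
      using True by (simp add: op_app_def sum_distrib_left mult.assoc)
    finally show ?thesis .
  qed (simp add: op_app_def)
qed

lemma op_eq_delta:
  assumes "\<And>c'. c' \<in> C L d \<Longrightarrow> op_app L d X (delta c') = op_app L d Y (delta c')"
    and "c \<in> C L d" "c' \<in> C L d"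
  shows "X c c' = Y c c'"
  using fun_cong[OF assms(1)[OF assms(3)], of c] assms(2,3) by (simp add: op_app_delta)

lemma op_mult_assoc: "op_mult L d (op_mult L d X Y) Z = op_mult L d X (op_mult L d Y Z)"
proof (intro ext)
  fix c c'
  show "op_mult L d (op_mult L d X Y) Z c c' = op_mult L d X (op_mult L d Y Z) c c'"
  proof (cases "c \<in> C L d \<and> c' \<in> C L d")
    case True
    have "op_mult L d (op_mult L d X Y) Z c c' = (\<Sum>e\<in>C L d. \<Sum>f\<in>C L d. X c f * Y f e * Z e c')"
      using True by (simp add: op_mult_def sum_distrib_right)
    also have "\<dots> = (\<Sum>f\<in>C L d. \<Sum>e\<in>C L d. X c f * Y f e * Z e c')" by (rule sum.swap)
    also have "\<dots> = op_mult L d X (op_mult L d Y Z) c c'"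
      using True by (simp add: op_mult_def sum_distrib_left mult.assoc)
    finally show ?thesis .
  qed (auto simp: op_mult_def)
qed

definition zo :: "nat \<Rightarrow> (site \<Rightarrow> nat) \<Rightarrow> op \<Rightarrow> bool" where
  "zo L d X \<longleftrightarrow> (\<forall>c c'. \<not> (c \<in> C L d \<and> c' \<in> C L d) \<longrightarrow> X c c' = 0)"

lemma zo_mult: "zo L d (op_mult L d X Y)" by (simp add: zo_def op_mult_def)
lemma zo_id: "zo L d (op_id L d)" by (simp add: zo_def op_id_def)

lemma op_mult_id_right: "zo L d X \<Longrightarrow> op_mult L d X (op_id L d) = X"
  by (intro ext) (auto simp: zo_def op_mult_def op_id_def if_distrib finite_C cong: if_cong)

lemma op_mult_id_left: "zo L d X \<Longrightarrow> op_mult L d (op_id L d) X = X"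
  by (intro ext) (auto simp: zo_def op_mult_def op_id_def finite_C if_distrib[of "\<lambda>z. z * _"] cong: if_cong)

definition subsp :: "nat \<Rightarrow> (site \<Rightarrow> nat) \<Rightarrow> vec set \<Rightarrow> bool" where
  "subsp L d V \<longleftrightarrow> (\<lambda>_. 0) \<in> V \<and> (\<forall>v\<in>V. \<forall>w\<in>V. (\<lambda>c. v c + w c) \<in> V) \<and>
     (\<forall>a. \<forall>v\<in>V. (\<lambda>c. a * v c) \<in> V) \<and> V \<subseteq> vspace L d"

lemma subsp_add: "subsp L d V \<Longrightarrow> v \<in> V \<Longrightarrow> w \<in> V \<Longrightarrow> (\<lambda>c. v c + w c) \<in> V"
  by (simp add: subsp_def)
lemma subsp_scale: "subsp L d V \<Longrightarrow> v \<in> V \<Longrightarrow> (\<lambda>c. a * v c) \<in> V"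
  by (simp add: subsp_def)
lemma subsp_zero: "subsp L d V \<Longrightarrow> (\<lambda>_. 0) \<in> V"
  by (simp add: subsp_def)
lemma subsp_vspace: "subsp L d V \<Longrightarrow> v \<in> V \<Longrightarrow> v \<in> vspace L d"
  by (auto simp: subsp_def)
lemma subsp_diff: "subsp L d V \<Longrightarrow> v \<in> V \<Longrightarrow> w \<in> V \<Longrightarrow> (\<lambda>c. v c - w c) \<in> V"
proof -
  assume V: "subsp L d V" and v: "v \<in> V" and w: "w \<in> V"
  have "(\<lambda>c. (-1) * w c) \<in> V" using subsp_scale[OF V w] .
  from subsp_add[OF V v this] show ?thesis by simp
qed

lemma subsp_sum:
  assumes V: "subsp L d V" and fin: "finite I"
  shows "(\<forall>i\<in>I. f i \<in> V) \<Longrightarrow> (\<lambda>c. \<Sum>i\<in>I. a i * f i c) \<in> V"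
  using fin
proof (induction I rule: finite_induct)
  case empty then show ?case using subsp_zero[OF V] by simp
next
  case (insert x F)
  have "(\<lambda>c. a x * f x c) \<in> V" using insert subsp_scale[OF V] by auto
  from subsp_add[OF V this insert.IH] insert show ?case by simp
qed

lemma vspace_out: "v \<in> vspace L d \<Longrightarrow> c \<notin> C L d \<Longrightarrow> v c = 0"
  by (simp add: vspace_def)

lemma inner_add_right: "inner L d u (\<lambda>c. v c + w c) = inner L d u v + inner L d u w"
  by (simp add: inner_def distrib_left sum.distrib)
lemma inner_diff_right: "inner L d u (\<lambda>c. v c - w c) = inner L d u v - inner L d u w"
  by (simp add: inner_def right_diff_distrib sum_subtractf)
lemma inner_scale_right: "inner L d u (\<lambda>c. a * v c) = a * inner L d u v"
  by (simp add: inner_def sum_distrib_left mult.left_commute)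
lemma inner_sum_right: "inner L d u (\<lambda>c. \<Sum>i\<in>I. a i * f i c) = (\<Sum>i\<in>I. a i * inner L d u (f i))"
proof -
  have "inner L d u (\<lambda>c. \<Sum>i\<in>I. a i * f i c) = (\<Sum>c\<in>C L d. \<Sum>i\<in>I. a i * (cnj (u c) * f i c))"
    by (simp add: inner_def sum_distrib_left mult.left_commute)
  also have "\<dots> = (\<Sum>i\<in>I. \<Sum>c\<in>C L d. a i * (cnj (u c) * f i c))" by (rule sum.swap)
  also have "\<dots> = (\<Sum>i\<in>I. a i * inner L d u (f i))" by (simp add: inner_def sum_distrib_left)
  finally show ?thesis .
qed
lemma inner_cnj: "inner L d w v = cnj (inner L d v w)"
  by (simp add: inner_def mult.commute)
lemma inner_zero_right: "inner L d u (\<lambda>_. 0) = 0" by (simp add: inner_def)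

lemma cnj_self: "cnj z * z = complex_of_real ((cmod z)\<^sup>2)"
  by (metis complex_norm_square mult.commute)
lemma inner_self: "inner L d v v = of_real (\<Sum>c\<in>C L d. (cmod (v c))\<^sup>2)"
  unfolding inner_def of_real_sum by (rule sum.cong) (simp_all only: cnj_self)

lemma inner_self_eq0: assumes "inner L d v v = 0" "c \<in> C L d" shows "v c = 0"
proof -
  have "complex_of_real (\<Sum>c\<in>C L d. (cmod (v c))\<^sup>2) = 0" using assms(1) by (simp only: inner_self)
  hence "(\<Sum>c\<in>C L d. (cmod (v c))\<^sup>2) = 0" by (simp only: of_real_eq_0_iff)
  hence "\<forall>c\<in>C L d. (cmod (v c))\<^sup>2 = 0" by (simp add: sum_nonneg_eq_0_iff finite_C)
  thus ?thesis using assms(2) by simp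
qed

lemma inner_self_eq0_vspace: "inner L d v v = 0 \<Longrightarrow> v \<in> vspace L d \<Longrightarrow> v = (\<lambda>_. 0)"
  by (rule ext) (metis inner_self_eq0 vspace_out)

definition fexp :: "nat \<Rightarrow> (site \<Rightarrow> nat) \<Rightarrow> vec list \<Rightarrow> vec \<Rightarrow> vec" where
  "fexp L d es v = (\<lambda>c. \<Sum>i<length es. inner L d (es!i) v * (es!i) c)"

definition onl :: "nat \<Rightarrow> (site \<Rightarrow> nat) \<Rightarrow> vec list \<Rightarrow> bool" where
  "onl L d es \<longleftrightarrow> (\<forall>i<length es. \<forall>j<length es. inner L d (es!i) (es!j) = (if i = j then 1 else 0))"

lemma onl_coeff:
  assumes "onl L d es" "j < length es"
  shows "inner L d (es!j) (\<lambda>c. \<Sum>i<length es. a i * (es!i) c) = a j"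
proof -
  have "(\<Sum>i<length es. a i * inner L d (es ! j) (es ! i)) = (\<Sum>i<length es. if i = j then a i else 0)"
    using assms unfolding onl_def by (intro sum.cong) auto
  thus ?thesis using assms(2) by (simp add: inner_sum_right)
qed

lemma onl_fexp:
  assumes "onl L d es" "v = (\<lambda>c. \<Sum>i<length es. a i * (es!i) c)"
  shows "v = fexp L d es v"
proof -
  have "\<forall>i<length es. inner L d (es!i) v = a i" using onl_coeff[OF assms(1)] assms(2) by simp
  thus ?thesis unfolding fexp_def by (subst assms(2)) (intro ext sum.cong, auto)
qed

lemma inner_scale_left: "inner L d (\<lambda>c. a * v c) w = cnj a * inner L d v w"
  by (simp add: inner_def sum_distrib_left mult.assoc)

lemma fexp_in:
  assumes "subsp L d V" "set es \<subseteq> V" shows "fexp L d es v \<in> V"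
  unfolding fexp_def using subsp_sum[OF assms(1), of "{..<length es}" "\<lambda>i. es!i"] assms(2)
  by (auto simp: nth_mem subset_iff)

lemma onb_exists:
  assumes "finite S"
  shows "S \<subseteq> C L d \<Longrightarrow> subsp L d V \<Longrightarrow> (\<forall>v\<in>V. \<forall>c. c \<notin> S \<longrightarrow> v c = 0) \<Longrightarrow>
    \<exists>es. onl L d es \<and> set es \<subseteq> V \<and> (\<forall>v\<in>V. v = fexp L d es v)"
  using assms
proof (induction S arbitrary: V rule: finite_induct)
  case empty
  have "\<forall>v\<in>V. v = fexp L d [] v" using empty.prems(3) by (auto simp: fexp_def)
  thus ?case by (intro exI[of _ "[]"]) (auto simp: onl_def)
next
  case (insert s S' V)
  note V = insert.prems(2)
  define V' where "V' = {v\<in>V. v s = 0}"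
  have V': "subsp L d V'" using V unfolding V'_def subsp_def by auto
  have supp': "\<forall>v\<in>V'. \<forall>c. c \<notin> S' \<longrightarrow> v c = 0" using insert.prems(3) unfolding V'_def by auto
  obtain es' where es': "onl L d es'" "set es' \<subseteq> V'" "\<forall>v\<in>V'. v = fexp L d es' v"
    using insert.IH[OF _ V' supp'] insert.prems(1) by auto
  show ?case
  proof (cases "\<forall>v\<in>V. v s = 0")
    case True
    hence "V' = V" unfolding V'_def by auto
    thus ?thesis using es' by auto
  next
    case False
    then obtain v0 where v0: "v0 \<in> V" "v0 s \<noteq> 0" by auto
    define n where "n = length es'"
    have esV: "\<forall>i<n. es'!i \<in> V \<and> (es'!i) s = 0" using es'(2) unfolding n_def V'_def
      using nth_mem by fastforce
    define r where "r = (\<lambda>c. v0 c - fexp L d es' v0 c)"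
    have rV: "r \<in> V" unfolding r_def
      by (rule subsp_diff[OF V v0(1) fexp_in[OF V]]) (use es'(2) V'_def in auto)
    have rs: "r s = v0 s" unfolding r_def fexp_def using esV n_def by simp
    have r_orth: "inner L d (es'!j) r = 0" if "j < n" for j
      using onl_coeff[OF es'(1), of j "\<lambda>i. inner L d (es'!i) v0"] that
      unfolding r_def fexp_def n_def by (simp add: inner_diff_right)
    define t where "t = (\<Sum>c\<in>C L d. (cmod (r c))\<^sup>2)"
    have sC: "s \<in> C L d" using insert.prems(1) by auto
    have "(cmod (r s))\<^sup>2 \<le> t" unfolding t_def
      by (rule member_le_sum[OF sC]) (simp_all add: finite_C)
    moreover have "(cmod (r s))\<^sup>2 > 0" using rs v0(2) by simp
    ultimately have tpos: "t > 0" by linarith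
    define k where "k = complex_of_real (1 / sqrt t)"
    define e where "e = (\<lambda>c. k * r c)"
    have eV: "e \<in> V" unfolding e_def using subsp_scale[OF V rV] .
    have rr: "inner L d r r = of_real t" unfolding t_def by (rule inner_self)
    have "inner L d e e = cnj k * (k * of_real t)"
      unfolding e_def by (simp add: inner_scale_left inner_scale_right rr)
    also have "\<dots> = of_real ((1 / sqrt t) * ((1 / sqrt t) * t))"
      by (simp only: k_def complex_cnj_complex_of_real of_real_mult)
    also have "(1 / sqrt t) * ((1 / sqrt t) * t) = 1"
      using tpos by (simp add: field_simps flip: power2_eq_square)
    finally have ee: "inner L d e e = 1" by simp
    have e_orth: "inner L d (es'!j) e = 0" "inner L d e (es'!j) = 0" if "j < n" for j
      using r_orth[OF that] unfolding e_def
      by (simp_all add: inner_scale_right inner_scale_left, subst inner_cnj, simp add: inner_scale_right r_orth[OF that])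
    define es where "es = es' @ [e]"
    have len: "length es = Suc n" unfolding es_def n_def by simp
    have nth: "es!i = (if i < n then es'!i else e)" if "i < Suc n" for i
      using that unfolding es_def n_def by (auto simp: nth_append)
    have onl: "onl L d es"
      unfolding onl_def len
    proof (intro allI impI)
      fix i j assume i: "i < Suc n" and j: "j < Suc n"
      show "inner L d (es ! i) (es ! j) = (if i = j then 1 else 0)"
        using es'(1) i j e_orth ee unfolding nth[OF i] nth[OF j] onl_def n_def[symmetric]
        by (cases "i < n"; cases "j < n") auto
    qed
    have setes: "set es \<subseteq> V" unfolding es_def using es'(2) eV V'_def by auto
    have span: "v = fexp L d es v" if v: "v \<in> V" for v
    proof -
      define t0 where "t0 = v s / v0 s"
      define v' where "v' = (\<lambda>c. v c - t0 * v0 c)"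
      have "v' \<in> V" unfolding v'_def by (rule subsp_diff[OF V v subsp_scale[OF V v0(1)]])
      moreover have "v' s = 0" unfolding v'_def t0_def using v0(2) by simp
      ultimately have v'V': "v' \<in> V'" unfolding V'_def by simp
      have v'e: "v' = fexp L d es' v'" using es'(3) v'V' by auto
      have v0e: "v0 = (\<lambda>c. fexp L d es' v0 c + r c)" unfolding r_def by simp
      have sk: "complex_of_real (sqrt t) * k = 1" unfolding k_def using tpos
        by (simp flip: of_real_mult)
      define a where "a = (\<lambda>i. if i < n then inner L d (es'!i) v' + t0 * inner L d (es'!i) v0
                              else t0 * complex_of_real (sqrt t))"
      have "v = (\<lambda>c. \<Sum>i<length es. a i * (es!i) c)"
      proof
        fix c
        have "(\<Sum>i<length es. a i * (es!i) c) =
              (\<Sum>i<n. a i * (es!i) c) + a n * (es!n) c" unfolding len by simp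
        also have "(\<Sum>i<n. a i * (es!i) c) =
           (\<Sum>i<n. inner L d (es'!i) v' * (es'!i) c) + t0 * (\<Sum>i<n. inner L d (es'!i) v0 * (es'!i) c)"
          by (simp add: a_def nth sum.distrib sum_distrib_left algebra_simps)
        also have "\<dots> = v' c + t0 * fexp L d es' v0 c"
          using fun_cong[OF v'e, of c] unfolding fexp_def n_def by simp
        also have "a n * (es!n) c = t0 * r c"
          by (simp add: a_def nth e_def mult.assoc sk[unfolded mult.assoc[symmetric]])
        finally have "(\<Sum>i<length es. a i * (es!i) c) = v' c + t0 * (fexp L d es' v0 c + r c)"
          by (simp add: algebra_simps)
        also have "\<dots> = v c" unfolding v'_def r_def by (simp add: algebra_simps)
        finally show "v c = (\<Sum>i<length es. a i * (es!i) c)" by simp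
      qed
      thus ?thesis by (rule onl_fexp[OF onl])
    qed
    show ?thesis using onl setes span by blast
  qed
qed

lemma inner_sum_left: "inner L d (\<lambda>c. \<Sum>i\<in>I. a i * f i c) v = (\<Sum>i\<in>I. cnj (a i) * inner L d (f i) v)"
proof -
  have "inner L d (\<lambda>c. \<Sum>i\<in>I. a i * f i c) v = cnj (inner L d v (\<lambda>c. \<Sum>i\<in>I. a i * f i c))"
    by (rule inner_cnj)
  also have "\<dots> = (\<Sum>i\<in>I. cnj (a i) * inner L d (f i) v)"
    by (simp add: inner_sum_right) (metis inner_cnj)
  finally show ?thesis .
qed

lemma op_app_add: "op_app L d T (\<lambda>c. x c + y c) = (\<lambda>c. op_app L d T x c + op_app L d T y c)"
  by (auto simp: op_app_def distrib_left sum.distrib)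
lemma op_app_diff: "op_app L d T (\<lambda>c. x c - y c) = (\<lambda>c. op_app L d T x c - op_app L d T y c)"
  by (auto simp: op_app_def right_diff_distrib sum_subtractf)
lemma op_app_zero: "op_app L d T (\<lambda>_. 0) = (\<lambda>_. 0)"
  by (auto simp: op_app_def)

lemma inner_delta_left: "c \<in> C L d \<Longrightarrow> inner L d (delta c) v = v c"
proof -
  assume c: "c \<in> C L d"
  have "inner L d (delta c) v = (\<Sum>ca\<in>C L d. if ca = c then v ca else 0)"
    unfolding inner_def delta_def by (intro sum.cong refl) auto
  thus ?thesis using c finite_C by simp
qed
lemma inner_delta_right: "c \<in> C L d \<Longrightarrow> inner L d v (delta c) = cnj (v c)"
  by (simp add: inner_def delta_def finite_C if_distrib[of "\<lambda>z. _ * z"] cong: if_cong)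

lemma herm_adj:
  assumes "hermitian L d T"
  shows "inner L d w (op_app L d T y) = inner L d (op_app L d T w) y"
proof -
  have "inner L d w (op_app L d T y) = (\<Sum>c\<in>C L d. \<Sum>e\<in>C L d. cnj (w c) * T c e * y e)"
    by (simp add: inner_def op_app_def sum_distrib_left mult.assoc)
  also have "\<dots> = (\<Sum>e\<in>C L d. \<Sum>c\<in>C L d. cnj (w c) * T c e * y e)" by (rule sum.swap)
  also have "\<dots> = (\<Sum>e\<in>C L d. \<Sum>c\<in>C L d. cnj (T e c * w c) * y e)"
  proof (intro sum.cong refl)
    fix e c assume e: "e \<in> C L d" and c: "c \<in> C L d"
    have h: "T c e = cnj (T e c)" using assms e c unfolding hermitian_def by blast
    show "cnj (w c) * T c e * y e = cnj (T e c * w c) * y e" by (simp only: h complex_cnj_mult mult.commute)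
  qed
  also have "\<dots> = inner L d (op_app L d T w) y"
    by (simp add: inner_def op_app_def sum_distrib_right)
  finally show ?thesis .
qed

lemma orth_proj_exists:
  assumes V: "subsp L d V" shows "\<exists>P. is_orth_proj L d P V"
proof -
  have supp: "\<forall>v\<in>V. \<forall>c. c \<notin> C L d \<longrightarrow> v c = 0" using V by (auto simp: subsp_def vspace_def)
  obtain es where es: "onl L d es" "set es \<subseteq> V" "\<forall>v\<in>V. v = fexp L d es v"
    using onb_exists[OF finite_C _ V supp] by auto
  define n where "n = length es"
  have esV: "\<forall>i<n. es!i \<in> V" using es(2) nth_mem unfolding n_def by auto
  define P where "P = (\<lambda>c c'. if c \<in> C L d \<and> c' \<in> C L d then \<Sum>i<n. (es!i) c * cnj ((es!i) c') else 0)"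
  have app: "op_app L d P v = fexp L d es v" for v
  proof
    fix c show "op_app L d P v c = fexp L d es v c"
    proof (cases "c \<in> C L d")
      case True
      have "op_app L d P v c = (\<Sum>c'\<in>C L d. \<Sum>i<n. (es!i) c * cnj ((es!i) c') * v c')"
        using True by (simp add: op_app_def P_def sum_distrib_right)
      also have "\<dots> = (\<Sum>i<n. \<Sum>c'\<in>C L d. (es!i) c * cnj ((es!i) c') * v c')" by (rule sum.swap)
      also have "\<dots> = fexp L d es v c"
        by (simp add: fexp_def n_def inner_def sum_distrib_left mult.assoc mult.commute mult.left_commute)
      finally show ?thesis .
    next
      case False
      have "\<forall>i<n. (es!i) c = 0" using esV supp False by auto
      thus ?thesis using False by (simp add: op_app_def fexp_def n_def)
    qed
  qed
  have "is_orth_proj L d P V"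
    unfolding is_orth_proj_def
  proof (intro conjI allI impI ballI)
    fix c c' assume "\<not> (c \<in> C L d \<and> c' \<in> C L d)" thus "P c c' = 0" unfolding P_def by auto
  next
    fix v assume "v \<in> vspace L d"
    show "op_app L d P v \<in> V" unfolding app by (rule fexp_in[OF V es(2)])
  next
    fix v w assume "v \<in> vspace L d" "w \<in> V"
    have w: "w = fexp L d es w" using es(3) \<open>w \<in> V\<close> by auto
    have "inner L d w v = (\<Sum>i<n. cnj (inner L d (es!i) w) * inner L d (es!i) v)"
      by (subst w) (simp add: fexp_def n_def inner_sum_left)
    also have "\<dots> = (\<Sum>i<n. inner L d (es!i) v * inner L d w (es!i))"
      by (intro sum.cong refl) (metis inner_cnj mult.commute)
    also have "\<dots> = inner L d w (fexp L d es v)"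
      by (simp add: fexp_def n_def inner_sum_right)
    finally show "inner L d w (\<lambda>c. v c - op_app L d P v c) = 0"
      by (simp add: app inner_diff_right)
  qed
  thus ?thesis by blast
qed

lemma orth_proj_unique:
  assumes V: "subsp L d V" and P1: "is_orth_proj L d P1 V" and P2: "is_orth_proj L d P2 V"
  shows "P1 = P2"
proof -
  have vv: "op_app L d P1 v = op_app L d P2 v" if v: "v \<in> vspace L d" for v
  proof -
    define x where "x = (\<lambda>c. op_app L d P1 v c - op_app L d P2 v c)"
    have x1: "op_app L d P1 v \<in> V" "op_app L d P2 v \<in> V" using P1 P2 v by (auto simp: is_orth_proj_def)
    have xV: "x \<in> V" unfolding x_def by (rule subsp_diff[OF V x1])
    have o1: "inner L d x (\<lambda>c. v c - op_app L d P1 v c) = 0" using P1 v xV by (auto simp: is_orth_proj_def)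
    have o2: "inner L d x (\<lambda>c. v c - op_app L d P2 v c) = 0" using P2 v xV by (auto simp: is_orth_proj_def)
    have "x = (\<lambda>c. (v c - op_app L d P2 v c) - (v c - op_app L d P1 v c))" unfolding x_def by auto
    hence "inner L d x x = inner L d x (\<lambda>c. v c - op_app L d P2 v c) - inner L d x (\<lambda>c. v c - op_app L d P1 v c)"
      by (simp only: inner_diff_right)
    hence "inner L d x x = 0" using o1 o2 by simp
    hence "x = (\<lambda>_. 0)" using subsp_vspace[OF V xV] by (rule inner_self_eq0_vspace)
    hence "\<forall>c. op_app L d P1 v c - op_app L d P2 v c = 0" unfolding x_def by (simp add: fun_eq_iff)
    thus ?thesis by (simp add: fun_eq_iff)
  qed
  show ?thesis
  proof (intro ext)
    fix c c'
    show "P1 c c' = P2 c c'"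
    proof (cases "c \<in> C L d \<and> c' \<in> C L d")
      case True thus ?thesis using op_eq_delta[where X=P1 and Y=P2] vv delta_vspace by blast
    next
      case False thus ?thesis using P1 P2 by (simp add: is_orth_proj_def)
    qed
  qed
qed

lemma orth_proj_is: "subsp L d V \<Longrightarrow> is_orth_proj L d (orth_proj L d V) V"
proof -
  assume V: "subsp L d V"
  obtain P where P: "is_orth_proj L d P V" using orth_proj_exists[OF V] by blast
  show ?thesis unfolding orth_proj_def
    by (rule theI[of _ P]) (use P orth_proj_unique[OF V] in auto)
qed

locale proj =
  fixes L :: nat and d :: "site \<Rightarrow> nat" and P :: op and V :: "vec set"
  assumes V: "subsp L d V" and P: "is_orth_proj L d P V"
begin

lemma prange: "op_app L d P v \<in> V" if "v \<in> vspace L d"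
  using P that by (simp add: is_orth_proj_def)
lemma orth: "inner L d w (\<lambda>c. v c - op_app L d P v c) = 0" if "v \<in> vspace L d" "w \<in> V"
  using P that by (simp add: is_orth_proj_def)
lemma zoP: "zo L d P" using P by (simp add: is_orth_proj_def zo_def)

lemma pfix: "op_app L d P v = v" if v: "v \<in> V"
proof -
  have vv: "v \<in> vspace L d" using subsp_vspace[OF V v] .
  define x where "x = (\<lambda>c. v c - op_app L d P v c)"
  have xV: "x \<in> V" unfolding x_def by (rule subsp_diff[OF V v prange[OF vv]])
  have "inner L d x x = 0" unfolding x_def using orth[OF vv xV[unfolded x_def]] .
  hence "x = (\<lambda>_. 0)" using subsp_vspace[OF V xV] by (rule inner_self_eq0_vspace)
  hence "\<forall>c. v c - op_app L d P v c = 0" unfolding x_def by (simp add: fun_eq_iff)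
  thus ?thesis by (simp add: fun_eq_iff)
qed

lemma pkill: "op_app L d P z = (\<lambda>_. 0)" if z: "z \<in> vspace L d" and zo: "\<forall>w\<in>V. inner L d w z = 0"
proof -
  define y where "y = op_app L d P z"
  have yV: "y \<in> V" unfolding y_def by (rule prange[OF z])
  have "inner L d y (\<lambda>c. z c - y c) = 0" unfolding y_def using orth[OF z yV[unfolded y_def]] .
  hence "inner L d y y = 0" using zo yV by (simp add: inner_diff_right)
  thus ?thesis unfolding y_def[symmetric] using subsp_vspace[OF V yV] by (rule inner_self_eq0_vspace)
qed

lemma adj: "inner L d (op_app L d P w) v = inner L d w (op_app L d P v)"
  if v: "v \<in> vspace L d" and w: "w \<in> vspace L d"
proof -
  have "inner L d (op_app L d P w) (\<lambda>c. v c - op_app L d P v c) = 0" by (rule orth[OF v prange[OF w]])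
  hence 1: "inner L d (op_app L d P w) v = inner L d (op_app L d P w) (op_app L d P v)"
    by (simp add: inner_diff_right)
  have "inner L d (op_app L d P v) (\<lambda>c. w c - op_app L d P w c) = 0" by (rule orth[OF w prange[OF v]])
  hence 2: "inner L d (op_app L d P v) w = inner L d (op_app L d P v) (op_app L d P w)"
    by (simp add: inner_diff_right)
  show ?thesis using 1 2 by (metis inner_cnj)
qed

lemma herm: "hermitian L d P"
  unfolding hermitian_def
proof (intro ballI)
  fix c c' assume c: "c \<in> C L d" and c': "c' \<in> C L d"
  have "inner L d (op_app L d P (delta c')) (delta c) = inner L d (delta c') (op_app L d P (delta c))"
    by (rule adj[OF delta_vspace[OF c] delta_vspace[OF c']])
  thus "P c' c = cnj (P c c')"
    using c c' by (simp add: inner_delta_left inner_delta_right op_app_delta)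
qed

lemma idem: "op_mult L d P P = P"
proof (intro ext)
  fix c c'
  show "op_mult L d P P c c' = P c c'"
  proof (cases "c \<in> C L d \<and> c' \<in> C L d")
    case True
    have "op_app L d (op_mult L d P P) v = op_app L d P v" if "v \<in> vspace L d" for v
      unfolding op_app_mult by (rule pfix[OF prange[OF that]])
    thus ?thesis using True op_eq_delta[where X="op_mult L d P P" and Y=P] delta_vspace by blast
  next
    case False thus ?thesis using zoP zo_mult[of L d P P] by (simp add: zo_def)
  qed
qed

lemma commute:
  assumes T: "hermitian L d T" and TV: "\<forall>v\<in>V. op_app L d T v \<in> V"
  shows "op_mult L d T P = op_mult L d P T"
proof -
  have vv: "op_app L d T (op_app L d P v) = op_app L d P (op_app L d T v)" if v: "v \<in> vspace L d" for v
  proof -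
    define x where "x = op_app L d P v"
    define y where "y = (\<lambda>c. v c - x c)"
    have xV: "x \<in> V" unfolding x_def by (rule prange[OF v])
    have yv: "y \<in> vspace L d" unfolding y_def using v subsp_vspace[OF V xV] by (simp add: vspace_def)
    have Tx: "op_app L d T x \<in> V" using TV xV by auto
    have Ty: "\<forall>w\<in>V. inner L d w (op_app L d T y) = 0"
    proof
      fix w assume w: "w \<in> V"
      have "inner L d w (op_app L d T y) = inner L d (op_app L d T w) y" by (rule herm_adj[OF T])
      also have "\<dots> = 0" unfolding y_def x_def using orth[OF v] TV w by auto
      finally show "inner L d w (op_app L d T y) = 0" .
    qed
    have "v = (\<lambda>c. x c + y c)" unfolding y_def by simp
    hence "op_app L d T v = (\<lambda>c. op_app L d T x c + op_app L d T y c)" by (metis op_app_add)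
    hence "op_app L d P (op_app L d T v) = (\<lambda>c. op_app L d P (op_app L d T x) c + op_app L d P (op_app L d T y) c)"
      by (simp add: op_app_add)
    also have "\<dots> = op_app L d T x"
      using pfix[OF Tx] pkill[OF op_app_vspace Ty] by simp
    finally show ?thesis unfolding x_def by simp
  qed
  show ?thesis
  proof (intro ext)
    fix c c'
    show "op_mult L d T P c c' = op_mult L d P T c c'"
    proof (cases "c \<in> C L d \<and> c' \<in> C L d")
      case True
      have "op_app L d (op_mult L d T P) (delta c'') = op_app L d (op_mult L d P T) (delta c'')"
        if "c'' \<in> C L d" for c''
        using vv[OF delta_vspace[OF that]] by (simp add: op_app_mult)
      thus ?thesis using True op_eq_delta[where X="op_mult L d T P" and Y="op_mult L d P T"] by blast
    next
      case False thus ?thesis using zo_mult[of L d T P] zo_mult[of L d P T] unfolding zo_def by metis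
    qed
  qed
qed

end

lemma op_app_scale: "op_app L d T (\<lambda>c. a * v c) = (\<lambda>c. a * op_app L d T v c)"
  by (auto simp: op_app_def sum_distrib_left mult.left_commute)

lemma subsp_kernel: "subsp L d (op_kernel L d X)"
  unfolding subsp_def op_kernel_def
  by (auto simp: op_app_zero op_app_add op_app_scale vspace_def)

lemma subsp_ground: "subsp L d (ground L d G)"
  unfolding subsp_def ground_def
  by (auto simp: op_app_zero op_app_add op_app_scale vspace_def)

lemma proj_Ploc: "proj L d (Ploc L d G A) (op_kernel L d (G A))"
  unfolding proj_def Ploc_def using subsp_kernel orth_proj_is by blast

lemma proj_Pgs: "proj L d (Pgs L d G) (ground L d G)"
  unfolding proj_def Pgs_def using subsp_ground orth_proj_is by blast

lemma Ploc_commute: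
  assumes herm: "hermitian L d (G A)" "hermitian L d (G A')"
    and comm: "op_mult L d (G A) (G A') = op_mult L d (G A') (G A)"
  shows "op_mult L d (Ploc L d G A) (Ploc L d G A') = op_mult L d (Ploc L d G A') (Ploc L d G A)"
proof -
  interpret p: proj L d "Ploc L d G A" "op_kernel L d (G A)" by (rule proj_Ploc)
  interpret p': proj L d "Ploc L d G A'" "op_kernel L d (G A')" by (rule proj_Ploc)
  have "\<forall>v\<in>op_kernel L d (G A). op_app L d (G A') v \<in> op_kernel L d (G A)"
  proof
    fix v assume v: "v \<in> op_kernel L d (G A)"
    have "op_app L d (G A) (op_app L d (G A') v) = op_app L d (G A') (op_app L d (G A) v)"
      by (metis comm op_app_mult)
    also have "\<dots> = (\<lambda>_. 0)" using v by (simp add: op_kernel_def op_app_zero)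
    finally show "op_app L d (G A') v \<in> op_kernel L d (G A)"
      by (simp add: op_kernel_def op_app_vspace)
  qed
  from p.commute[OF herm(2) this]
  have c1: "op_mult L d (G A') (Ploc L d G A) = op_mult L d (Ploc L d G A) (G A')" .
  have "\<forall>v\<in>op_kernel L d (G A'). op_app L d (Ploc L d G A) v \<in> op_kernel L d (G A')"
  proof
    fix v assume v: "v \<in> op_kernel L d (G A')"
    have "op_app L d (G A') (op_app L d (Ploc L d G A) v) = op_app L d (Ploc L d G A) (op_app L d (G A') v)"
      by (metis c1 op_app_mult)
    also have "\<dots> = (\<lambda>_. 0)" using v by (simp add: op_kernel_def op_app_zero)
    finally show "op_app L d (Ploc L d G A) v \<in> op_kernel L d (G A')"
      by (simp add: op_kernel_def op_app_vspace)
  qed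
  from p'.commute[OF p.herm this] show ?thesis .
qed

lemma herm_mult_comm:
  assumes "hermitian L d X" "hermitian L d Y" "op_mult L d X Y = op_mult L d Y X"
  shows "hermitian L d (op_mult L d X Y)"
  unfolding hermitian_def
proof (intro ballI)
  fix c c' assume c: "c \<in> C L d" and c': "c' \<in> C L d"
  have "cnj (op_mult L d X Y c c') = (\<Sum>e\<in>C L d. cnj (X c e) * cnj (Y e c'))"
    using c c' by (simp add: op_mult_def)
  also have "\<dots> = (\<Sum>e\<in>C L d. Y c' e * X e c)"
  proof (intro sum.cong refl)
    fix e assume e: "e \<in> C L d"
    have h1: "X e c = cnj (X c e)" using assms(1) e c unfolding hermitian_def by blast
    have h2: "Y c' e = cnj (Y e c')" using assms(2) e c' unfolding hermitian_def by blast
    show "cnj (X c e) * cnj (Y e c') = Y c' e * X e c" by (simp only: h1 h2 mult.commute)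
  qed
  also have "\<dots> = op_mult L d Y X c' c" using c c' by (simp add: op_mult_def)
  finally show "op_mult L d X Y c' c = cnj (op_mult L d X Y c c')" using assms(3) by simp
qed

lemma herm_id: "hermitian L d (op_id L d)"
  by (auto simp: hermitian_def op_id_def)

lemma foldr_props:
  assumes herm: "\<And>a. a \<in> S \<Longrightarrow> hermitian L d (F a)"
    and zoF: "\<And>a. a \<in> S \<Longrightarrow> zo L d (F a)"
    and idem: "\<And>a. a \<in> S \<Longrightarrow> op_mult L d (F a) (F a) = F a"
    and comm: "\<And>a b. a \<in> S \<Longrightarrow> b \<in> S \<Longrightarrow> op_mult L d (F a) (F b) = op_mult L d (F b) (F a)"
  shows "set xs \<subseteq> S \<Longrightarrow> (let R = foldr (op_mult L d) (map F xs) (op_id L d) in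
    hermitian L d R \<and> zo L d R \<and> op_mult L d R R = R \<and>
    (\<forall>a\<in>S. op_mult L d (F a) R = op_mult L d R (F a)))"
proof (induction xs)
  case Nil
  show ?case using zoF by (simp add: herm_id zo_id op_mult_id_left op_mult_id_right)
next
  case (Cons x xs)
  define R where "R = foldr (op_mult L d) (map F xs) (op_id L d)"
  have x: "x \<in> S" using Cons.prems by simp
  have IH: "hermitian L d R" "zo L d R" "op_mult L d R R = R"
     "\<And>a. a\<in>S \<Longrightarrow> op_mult L d (F a) R = op_mult L d R (F a)"
    using Cons by (auto simp: R_def Let_def)
  let ?M = "op_mult L d"
  have cm: "?M (F a) (?M (F x) R) = ?M (?M (F x) R) (F a)" if a: "a \<in> S" for a
    by (metis IH(4) a comm x op_mult_assoc)
  have id: "?M (?M (F x) R) (?M (F x) R) = ?M (F x) R"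
  proof -
    have "?M (?M (F x) R) (?M (F x) R) = ?M (F x) (?M R (?M (F x) R))" by (simp add: op_mult_assoc)
    also have "?M R (?M (F x) R) = ?M (F x) (?M R R)" by (metis IH(4) x op_mult_assoc)
    also have "?M (F x) (?M (F x) (?M R R)) = ?M (F x) R"
      by (metis IH(3) idem x op_mult_assoc)
    finally show ?thesis .
  qed
  have h: "hermitian L d (?M (F x) R)"
    by (rule herm_mult_comm[OF herm[OF x] IH(1) IH(4)[OF x]])
  show ?case using cm id h zo_mult by (simp add: R_def[symmetric] Let_def)
qed

lemma square_sub: "0 < L \<Longrightarrow> square L x y r \<subseteq> lattice L"
  by (auto simp: square_def lattice_def)

lemma finite_sq: "0 < L \<Longrightarrow> finite {A \<in> squares L 2. A \<subseteq> B}"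
proof -
  assume L: "0 < L"
  have "{A \<in> squares L 2. A \<subseteq> B} \<subseteq> Pow (lattice L)"
    using square_sub[OF L] by (auto simp: squares_def)
  thus ?thesis by (rule finite_subset) (simp add: finite_lattice)
qed

lemma PB_props:
  assumes L: "0 < L" and H: "H0_assms L d G"
  shows "hermitian L d (PB L d G B) \<and> zo L d (PB L d G B) \<and> op_mult L d (PB L d G B) (PB L d G B) = PB L d G B"
proof -
  define S where "S = {A \<in> squares L 2. A \<subseteq> B}"
  obtain xs where xs: "distinct xs \<and> set xs = S" using finite_distinct_list[OF finite_sq[OF L]] S_def by blast
  define ys where "ys = (SOME xs. distinct xs \<and> set xs = S)"
  have ys: "set ys = S" using someI[of "\<lambda>xs. distinct xs \<and> set xs = S", OF xs] ys_def by simp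
  have hermG: "\<And>A. A \<in> S \<Longrightarrow> hermitian L d (G A)" and commG: "\<And>A A'. A \<in> S \<Longrightarrow> A' \<in> S \<Longrightarrow>
    op_mult L d (G A) (G A') = op_mult L d (G A') (G A)"
    using H unfolding H0_assms_def psd_def S_def by auto
  have "let R = foldr (op_mult L d) (map (Ploc L d G) ys) (op_id L d) in
    hermitian L d R \<and> zo L d R \<and> op_mult L d R R = R \<and> (\<forall>a\<in>S. op_mult L d (Ploc L d G a) R = op_mult L d R (Ploc L d G a))"
    by (rule foldr_props[OF proj.herm[OF proj_Ploc] proj.zoP[OF proj_Ploc] proj.idem[OF proj_Ploc]
          Ploc_commute[OF hermG hermG commG]]) (simp_all add: ys)
  thus ?thesis unfolding PB_def op_prod_def S_def[symmetric] ys_def[symmetric] by (simp add: Let_def)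
qed

locale dec =
  fixes L :: nat and d :: "site \<Rightarrow> nat" and A :: "site set"
  assumes AL: "A \<subseteq> lattice L"
begin

abbreviation "Ab \<equiv> lattice L - A"

lemma merge_C: "a \<in> confs d A \<Longrightarrow> g \<in> confs d Ab \<Longrightarrow> merge A a g \<in> C L d"
  unfolding confs_def merge_def using AL by auto

lemma restr_A: "c \<in> C L d \<Longrightarrow> restr c A \<in> confs d A"
  unfolding confs_def restr_def using AL by auto
lemma restr_Ab: "c \<in> C L d \<Longrightarrow> restr c Ab \<in> confs d Ab"
  unfolding confs_def restr_def by auto
lemma merge_restr: "c \<in> C L d \<Longrightarrow> merge A (restr c A) (restr c Ab) = c"
  unfolding merge_def restr_def by (auto intro!: ext confs_out)
lemma restr_merge_A: "a \<in> confs d A \<Longrightarrow> restr (merge A a g) A = a"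
  unfolding merge_def restr_def by (auto intro!: ext confs_out)
lemma restr_merge_Ab: "g \<in> confs d Ab \<Longrightarrow> restr (merge A a g) Ab = g"
  unfolding merge_def restr_def by (auto intro!: ext confs_out)

lemma bij: "bij_betw (\<lambda>(a, g). merge A a g) (confs d A \<times> confs d Ab) (C L d)"
proof (rule bij_betw_byWitness[where f' = "\<lambda>c. (restr c A, restr c Ab)"])
  show "\<forall>ag\<in>confs d A \<times> confs d Ab. (\<lambda>c. (restr c A, restr c Ab)) ((\<lambda>(a, g). merge A a g) ag) = ag"
    by (auto simp: restr_merge_A restr_merge_Ab)
  show "\<forall>c\<in>C L d. (\<lambda>(a, g). merge A a g) (restr c A, restr c Ab) = c" by (simp add: merge_restr)
  show "(\<lambda>(a, g). merge A a g) ` (confs d A \<times> confs d Ab) \<subseteq> C L d" by (auto simp: merge_C)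
  show "(\<lambda>c. (restr c A, restr c Ab)) ` C L d \<subseteq> confs d A \<times> confs d Ab"
    by (auto simp: restr_A restr_Ab)
qed

lemma finA: "finite (confs d A)" using finite_confs finite_subset[OF AL finite_lattice] by blast
lemma finAb: "finite (confs d Ab)" using finite_confs finite_lattice by blast

lemma sum_dec: "(\<Sum>c\<in>C L d. h c) = (\<Sum>a\<in>confs d A. \<Sum>g\<in>confs d Ab. h (merge A a g))"
proof -
  have "(\<Sum>c\<in>C L d. h c) = (\<Sum>ag\<in>confs d A \<times> confs d Ab. h ((\<lambda>(a, g). merge A a g) ag))"
    by (rule sum.reindex_bij_betw[OF bij, symmetric])
  also have "\<dots> = (\<Sum>a\<in>confs d A. \<Sum>g\<in>confs d Ab. h (merge A a g))"
    by (simp add: sum.cartesian_product prod.case_distrib)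
  finally show ?thesis .
qed

lemma agree: "g \<in> confs d Ab \<Longrightarrow> g' \<in> confs d Ab \<Longrightarrow>
   (\<forall>u\<in>lattice L - A. merge A a g u = merge A a' g' u) \<longleftrightarrow> g = g'"
  unfolding merge_def by (auto intro!: ext) (metis confs_out)

end

locale stp = dec +
  fixes Op :: op and f :: op
  assumes Of: "\<And>c c'. c \<in> C L d \<Longrightarrow> c' \<in> C L d \<Longrightarrow>
     Op c c' = (if \<forall>u\<in>lattice L - A. c u = c' u then f (restr c A) (restr c' A) else 0)"
begin

lemma Omerge: "a \<in> confs d A \<Longrightarrow> a' \<in> confs d A \<Longrightarrow> g \<in> confs d Ab \<Longrightarrow> g' \<in> confs d Ab \<Longrightarrow>
   Op (merge A a g) (merge A a' g') = (if g = g' then f a a' else 0)"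
  by (simp add: Of merge_C agree restr_merge_A)

definition K :: "op \<Rightarrow> cfg \<Rightarrow> cfg \<Rightarrow> complex" where
  "K X c c' = (\<Sum>e\<in>C L d. X c' e * cnj (Op c e))"

lemma mult_K:
  assumes X: "hermitian L d X" and c: "c \<in> C L d" and c': "c' \<in> C L d"
  shows "op_mult L d Op X c c' = cnj (K X c c')"
proof -
  have "op_mult L d Op X c c' = (\<Sum>e\<in>C L d. Op c e * X e c')" using c c' by (simp add: op_mult_def)
  also have "\<dots> = (\<Sum>e\<in>C L d. cnj (X c' e * cnj (Op c e)))"
  proof (intro sum.cong refl)
    fix e assume e: "e \<in> C L d"
    have h: "X e c' = cnj (X c' e)" using X e c' unfolding hermitian_def by blast
    show "Op c e * X e c' = cnj (X c' e * cnj (Op c e))" by (simp only: h complex_cnj_mult complex_cnj_cnj mult.commute)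
  qed
  also have "\<dots> = cnj (K X c c')" by (simp add: K_def)
  finally show ?thesis .
qed

lemma Kmerge:
  assumes a: "a \<in> confs d A" and g: "g \<in> confs d Ab"
  shows "K X (merge A a g) c' = (\<Sum>a''\<in>confs d A. X c' (merge A a'' g) * cnj (f a a''))"
proof -
  have "K X (merge A a g) c' = (\<Sum>a''\<in>confs d A. \<Sum>g''\<in>confs d Ab.
          (if g = g'' then X c' (merge A a'' g) * cnj (f a a'') else 0))"
    unfolding K_def sum_dec using a g by (intro sum.cong refl) (auto simp: Omerge)
  also have "\<dots> = (\<Sum>a''\<in>confs d A. X c' (merge A a'' g) * cnj (f a a''))"
    using g finAb by simp
  finally show ?thesis .
qed

definition w :: "cfg \<Rightarrow> vec" where
  "w a = (\<lambda>a''. if a'' \<in> confs d A then cnj (f a a'') else 0)"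

lemma rho:
  assumes a: "a \<in> confs d A" and a': "a' \<in> confs d A"
  shows "(\<Sum>a''\<in>confs d A. ptrace L d A X a' a'' * w a a'') = (\<Sum>g\<in>confs d Ab. K X (merge A a g) (merge A a' g))"
proof -
  have "(\<Sum>a''\<in>confs d A. ptrace L d A X a' a'' * w a a'') =
        (\<Sum>a''\<in>confs d A. \<Sum>g\<in>confs d Ab. X (merge A a' g) (merge A a'' g) * cnj (f a a''))"
    using a' by (intro sum.cong refl) (simp add: ptrace_def w_def sum_distrib_right)
  also have "\<dots> = (\<Sum>g\<in>confs d Ab. \<Sum>a''\<in>confs d A. X (merge A a' g) (merge A a'' g) * cnj (f a a''))"
    by (rule sum.swap)
  also have "\<dots> = (\<Sum>g\<in>confs d Ab. K X (merge A a g) (merge A a' g))"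
    using a by (intro sum.cong refl) (simp add: Kmerge)
  finally show ?thesis .
qed

lemma w_kernel:
  assumes "\<And>c c'. c \<in> C L d \<Longrightarrow> c' \<in> C L d \<Longrightarrow> K X c c' = 0" and a: "a \<in> confs d A"
  shows "w a \<in> loc_kernel d A (ptrace L d A X)"
  unfolding loc_kernel_def
proof (intro CollectI conjI allI impI ballI)
  fix a'' assume "a'' \<notin> confs d A" thus "w a a'' = 0" by (simp add: w_def)
next
  fix a' assume a': "a' \<in> confs d A"
  show "(\<Sum>a''\<in>confs d A. ptrace L d A X a' a'' * w a a'') = 0"
    unfolding rho[OF a a'] using assms a a' by (simp add: merge_C)
qed

definition u :: "cfg \<Rightarrow> vec" where "u c = (\<lambda>e. cnj (Op c e))"

lemma K_app: "c' \<in> C L d \<Longrightarrow> K X c c' = op_app L d X (u c) c'"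
  by (simp add: K_def op_app_def u_def)

lemma from_kernel:
  assumes herm: "hermitian L d Q" and idem: "op_mult L d Q Q = Q"
    and ker: "\<And>a. a \<in> confs d A \<Longrightarrow> w a \<in> loc_kernel d A (ptrace L d A Q)"
    and c: "c \<in> C L d" and c': "c' \<in> C L d"
  shows "K Q c c' = 0"
proof -
  define a where "a = restr c A"
  define g0 where "g0 = restr c Ab"
  have a: "a \<in> confs d A" and g0: "g0 \<in> confs d Ab" and cm: "c = merge A a g0"
    using c by (auto simp: a_def g0_def restr_A restr_Ab merge_restr)
  have zero: "(\<Sum>g\<in>confs d Ab. K Q (merge A a g) (merge A a' g)) = 0" if a': "a' \<in> confs d A" for a'
  proof -
    have "(\<Sum>a''\<in>confs d A. ptrace L d A Q a' a'' * w a a'') = 0"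
      using ker[OF a] a' unfolding loc_kernel_def by blast
    thus ?thesis using rho[OF a a'] by simp
  qed
  define s where "s = (\<lambda>g. inner L d (op_app L d Q (u (merge A a g))) (op_app L d Q (u (merge A a g))))"
  have s_eq: "s g = (\<Sum>a'\<in>confs d A. f a a' * K Q (merge A a g) (merge A a' g))"
    if g: "g \<in> confs d Ab" for g
  proof -
    let ?u = "u (merge A a g)"
    have "s g = inner L d ?u (op_app L d Q (op_app L d Q ?u))"
      unfolding s_def by (rule herm_adj[OF herm, symmetric])
    also have "\<dots> = inner L d ?u (op_app L d Q ?u)" by (simp flip: op_app_mult add: idem)
    also have "\<dots> = (\<Sum>e\<in>C L d. Op (merge A a g) e * K Q (merge A a g) e)"
      unfolding inner_def by (intro sum.cong refl) (simp add: u_def K_app)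
    also have "\<dots> = (\<Sum>a'\<in>confs d A. \<Sum>g'\<in>confs d Ab.
         (if g = g' then f a a' * K Q (merge A a g) (merge A a' g) else 0))"
      unfolding sum_dec using a g by (intro sum.cong refl) (auto simp: Omerge)
    also have "\<dots> = (\<Sum>a'\<in>confs d A. f a a' * K Q (merge A a g) (merge A a' g))"
      using g finAb by simp
    finally show ?thesis .
  qed
  have "(\<Sum>g\<in>confs d Ab. s g) = (\<Sum>a'\<in>confs d A. f a a' * (\<Sum>g\<in>confs d Ab. K Q (merge A a g) (merge A a' g)))"
    by (simp add: s_eq sum_distrib_left sum.swap[of _ "confs d Ab"])
  also have "\<dots> = 0" using zero by simp
  finally have sum0: "(\<Sum>g\<in>confs d Ab. s g) = 0" .
  define t where "t = (\<lambda>g. \<Sum>e\<in>C L d. (cmod (op_app L d Q (u (merge A a g)) e))\<^sup>2)"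
  have "s g = of_real (t g)" for g unfolding s_def t_def by (rule inner_self)
  hence "complex_of_real (\<Sum>g\<in>confs d Ab. t g) = 0" using sum0 by (simp add: of_real_sum)
  hence "(\<Sum>g\<in>confs d Ab. t g) = 0" by (simp only: of_real_eq_0_iff)
  hence "t g0 = 0" using g0 finAb by (simp add: sum_nonneg_eq_0_iff t_def sum_nonneg)
  hence "s g0 = 0" by (simp add: \<open>\<And>g. s g = of_real (t g)\<close>)
  hence "op_app L d Q (u c) c' = 0" unfolding s_def cm by (rule inner_self_eq0[OF _ c'])
  thus ?thesis by (simp add: K_app[OF c'])
qed

end

theorem corollary1:
  fixes L :: nat and d :: "site \<Rightarrow> nat" and G :: "site set \<Rightarrow> op"
    and c :: real and Lstar :: nat and r :: nat and x y :: int and OA :: op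
  assumes "0 < L"
    and "H0_assms L d G"
    and "0 < c" and "real Lstar \<ge> c * real L"
    and "TQO2 L d G Lstar"
    and "1 \<le> r" and "r \<le> Lstar"
    and "acts_on L d (square L x y r) OA"
    and "op_mult L d OA (Pgs L d G) = (\<lambda>_ _. 0)"
  shows "op_mult L d OA (PB L d G (square L (x - 1) (y - 1) (r + 2))) = (\<lambda>_ _. 0)"
proof -
  define A where "A = square L x y r"
  define Q where "Q = PB L d G (square L (x - 1) (y - 1) (r + 2))"
  define Pm where "Pm = Pgs L d G"
  obtain f where f: "\<forall>c\<in>C L d. \<forall>c'\<in>C L d.
      OA c c' = (if \<forall>u\<in>lattice L - A. c u = c' u then f (restr c A) (restr c' A) else 0)"
    using assms(8) unfolding acts_on_def A_def by blast
  interpret stp L d A OA f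
    by unfold_locales (use square_sub[OF assms(1)] f in \<open>auto simp: A_def\<close>)
  have hP: "hermitian L d Pm" unfolding Pm_def by (rule proj.herm[OF proj_Pgs])
  have KP: "K Pm c c' = 0" if "c \<in> C L d" "c' \<in> C L d" for c c'
  proof -
    have "cnj (K Pm c c') = 0" using mult_K[OF hP that] assms(9) by (simp add: Pm_def)
    thus ?thesis by simp
  qed
  have ker: "w a \<in> loc_kernel d A (ptrace L d A Q)" if a: "a \<in> confs d A" for a
  proof -
    have "w a \<in> loc_kernel d A (ptrace L d A Pm)" by (rule w_kernel[OF KP a])
    moreover have "loc_kernel d A (ptrace L d A Pm) = loc_kernel d A (ptrace L d A Q)"
      using assms(5,6,7) unfolding TQO2_def A_def Pm_def Q_def by blast
    ultimately show ?thesis by simp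
  qed
  have Qp: "hermitian L d Q" "zo L d Q" "op_mult L d Q Q = Q"
    using PB_props[OF assms(1,2)] unfolding Q_def by auto
  have "op_mult L d OA Q c c' = 0" for c c'
  proof (cases "c \<in> C L d \<and> c' \<in> C L d")
    case True
    hence "K Q c c' = 0" using from_kernel[OF Qp(1) Qp(3) ker] by blast
    thus ?thesis using mult_K[OF Qp(1)] True by simp
  next
    case False thus ?thesis using zo_mult[of L d OA Q] unfolding zo_def by metis
  qed
  thus ?thesis unfolding Q_def by (intro ext) simp
qed

end
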